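(* Cobordism is an equivalence relation on $\mathcal{S}_2$; in particular, every $G\in\mathcal{S}_2$ is cobordant to itself, i.e. there is a three-dimensional geometric graph with boundary $H$ whose boundary is isomorphic to the disjoint union of two copies of $G$.
   Context: All graphs are finite simple graphs. For a vertex $x$, $S(x)$ is the subgraph induced by the neighbors of $x$. A graph is contractible if it is $K_1$, or, inductively, if there is a vertex $x$ with both $S(x)$ and the subgraph induced by $V\setminus\{x\}$ contractible. $\mathcal{G}_0$: graphs without edges; $\mathcal{S}_0$: those with two vertices; $\mathcal{B}_0$: those with one vertex. For $d\ge1$: $\mathcal{G}_d$ is the class of graphs in which every $S(x)$ lies in $\mathcal{S}_{d-1}\cup\mathcal{B}_{d-1}$; the boundary $\delta G$ is the subgraph induced by vertices with $S(x)\in\mathcal{B}_{d-1}$, and the interior (other vertices) must be nonempty; $\mathcal{B}_d$: contractible graphs in $\mathcal{G}_d$ with boundary in $\mathcal{S}_{d-1}$; $\mathcal{S}_d$: non-contractible graphs in $\mathcal{G}_d$ such that removing any single vertex yields a graph in $\mathcal{B}_d$. A three-dimensional geometric graph with boundary is a graph in which every unit sphere lies in $\mathcal{S}_2\cup\mathcal{B}_2$ (i.e. a graph in $\mathcal{G}_3$). Two graphs $G_1,G_2$ (two-dimensional, without boundary) are cobordant if there is a three-dimensional geometric graph with boundary $H$ such that the boundary $\delta H$ is the disjoint union $G_1\sqcup G_2$. *)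

theory Defs
  imports Main
begin

type_synonym 'a graph = "'a set \<times> ('a \<times> 'a) set"

definition verts :: "'a graph \<Rightarrow> 'a set" where "verts G = fst G"
definition edges :: "'a graph \<Rightarrow> ('a \<times> 'a) set" where "edges G = snd G"

definition is_graph :: "'a graph \<Rightarrow> bool" where
  "is_graph G \<longleftrightarrow> finite (verts G) \<and> edges G \<subseteq> verts G \<times> verts G
     \<and> (\<forall>x y. (x, y) \<in> edges G \<longrightarrow> (y, x) \<in> edges G)
     \<and> (\<forall>x. (x, x) \<notin> edges G)"

definition induce :: "'a graph \<Rightarrow> 'a set \<Rightarrow> 'a graph" where
  "induce G W = (verts G \<inter> W, edges G \<inter> ((verts G \<inter> W) \<times> (verts G \<inter> W)))"

definition sphere :: "'a graph \<Rightarrow> 'a \<Rightarrow> 'a graph" where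
  "sphere G x = induce G {y. (x, y) \<in> edges G}"

inductive contractible :: "'a graph \<Rightarrow> bool" where
  K1: "is_graph G \<Longrightarrow> card (verts G) = 1 \<Longrightarrow> contractible G"
| step: "is_graph G \<Longrightarrow> x \<in> verts G \<Longrightarrow> contractible (sphere G x)
     \<Longrightarrow> contractible (induce G (verts G - {x})) \<Longrightarrow> contractible G"

definition bdry :: "('a graph \<Rightarrow> bool) \<Rightarrow> 'a graph \<Rightarrow> 'a graph" where
  "bdry B G = induce G {x \<in> verts G. B (sphere G x)}"

text \<open>G_d from S_{d-1}, B_{d-1} (d \<ge> 1): every unit sphere in S_{d-1} \<union> B_{d-1},
  interior nonempty.\<close>
definition Gstep :: "('a graph \<Rightarrow> bool) \<Rightarrow> ('a graph \<Rightarrow> bool) \<Rightarrow> 'a graph \<Rightarrow> bool" where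
  "Gstep S B G \<longleftrightarrow> is_graph G
     \<and> (\<forall>x \<in> verts G. S (sphere G x) \<or> B (sphere G x))
     \<and> (\<exists>x \<in> verts G. \<not> B (sphere G x))"

definition Bstep :: "('a graph \<Rightarrow> bool) \<Rightarrow> ('a graph \<Rightarrow> bool) \<Rightarrow> 'a graph \<Rightarrow> bool" where
  "Bstep S B G \<longleftrightarrow> Gstep S B G \<and> contractible G \<and> S (bdry B G)"

definition Sstep :: "('a graph \<Rightarrow> bool) \<Rightarrow> ('a graph \<Rightarrow> bool) \<Rightarrow> 'a graph \<Rightarrow> bool" where
  "Sstep S B G \<longleftrightarrow> Gstep S B G \<and> \<not> contractible G
     \<and> (\<forall>x \<in> verts G. Bstep S B (induce G (verts G - {x})))"

primrec SB :: "nat \<Rightarrow> ('a graph \<Rightarrow> bool) \<times> ('a graph \<Rightarrow> bool)" where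
  "SB 0 = ((\<lambda>G. is_graph G \<and> edges G = {} \<and> card (verts G) = 2),
           (\<lambda>G. is_graph G \<and> edges G = {} \<and> card (verts G) = 1))"
| "SB (Suc d) = (Sstep (fst (SB d)) (snd (SB d)), Bstep (fst (SB d)) (snd (SB d)))"

definition Sd :: "nat \<Rightarrow> 'a graph \<Rightarrow> bool" where "Sd d = fst (SB d)"
definition Bd :: "nat \<Rightarrow> 'a graph \<Rightarrow> bool" where "Bd d = snd (SB d)"

definition Gd :: "nat \<Rightarrow> 'a graph \<Rightarrow> bool" where
  "Gd d G = (if d = 0 then is_graph G \<and> edges G = {} else Gstep (Sd (d - 1)) (Bd (d - 1)) G)"

definition delta :: "nat \<Rightarrow> 'a graph \<Rightarrow> 'a graph" where
  "delta d G = bdry (Bd (d - 1)) G"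

definition graph_iso :: "'a graph \<Rightarrow> 'b graph \<Rightarrow> bool" where
  "graph_iso G H \<longleftrightarrow> (\<exists>f. bij_betw f (verts G) (verts H)
     \<and> (\<forall>x \<in> verts G. \<forall>y \<in> verts G. (x, y) \<in> edges G \<longleftrightarrow> (f x, f y) \<in> edges H))"

definition disj_union :: "'a graph \<Rightarrow> 'b graph \<Rightarrow> ('a + 'b) graph" where
  "disj_union G H = (verts G <+> verts H,
     (\<lambda>(x,y). (Inl x, Inl y)) ` edges G \<union> (\<lambda>(x,y). (Inr x, Inr y)) ` edges H)"

text \<open>Cobordism: some three-dimensional geometric graph with boundary H (vertices
  taken in nat, which is no restriction for finite graphs) has boundary isomorphic to
  the disjoint union.\<close>
definition cobordant :: "'a graph \<Rightarrow> 'a graph \<Rightarrow> bool" where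
  "cobordant G1 G2 \<longleftrightarrow> (\<exists>H :: nat graph. Gd 3 H \<and> graph_iso (delta 3 H) (disj_union G1 G2))"

end

theory Submission
  imports Defs
begin

definition mapg :: "('a \<Rightarrow> 'b) \<Rightarrow> 'a graph \<Rightarrow> 'b graph" where
  "mapg f G = (f ` verts G, map_prod f f ` edges G)"

lemma verts_mapg[simp]: "verts (mapg f G) = f ` verts G" by (simp add: mapg_def verts_def)
lemma edges_mapg[simp]: "edges (mapg f G) = map_prod f f ` edges G" by (simp add: mapg_def edges_def)
lemma verts_induce[simp]: "verts (induce G W) = verts G \<inter> W" by (simp add: induce_def verts_def)
lemma edges_induce[simp]: "edges (induce G W) = edges G \<inter> ((verts G \<inter> W) \<times> (verts G \<inter> W))"
  by (simp add: induce_def edges_def)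
lemma graph_eqI: "verts G = verts H \<Longrightarrow> edges G = edges H \<Longrightarrow> G = H"
  by (simp add: verts_def edges_def prod_eq_iff)

lemma is_graph_induce: "is_graph G \<Longrightarrow> is_graph (induce G W)"
  unfolding is_graph_def by auto
lemma is_graph_sphere: "is_graph G \<Longrightarrow> is_graph (sphere G x)"
  unfolding sphere_def by (rule is_graph_induce)
lemma is_graph_bdry: "is_graph G \<Longrightarrow> is_graph (bdry B G)"
  unfolding bdry_def by (rule is_graph_induce)

lemma is_graph_mapg: "is_graph G \<Longrightarrow> inj_on f (verts G) \<Longrightarrow> is_graph (mapg f G)"
  unfolding is_graph_def apply (auto simp: inj_on_def)
  by blast

lemma mapg_inv: "is_graph G \<Longrightarrow> inj_on f (verts G) \<Longrightarrow> mapg (inv_into (verts G) f) (mapg f G) = G"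
proof -
  assume g: "is_graph G" and i: "inj_on f (verts G)"
  have e: "edges G \<subseteq> verts G \<times> verts G" using g by (simp add: is_graph_def)
  have "map_prod (inv_into (verts G) f) (inv_into (verts G) f) ` map_prod f f ` edges G
      = (\<lambda>p. p) ` edges G"
    unfolding image_image using e i by (intro image_cong) auto
  then show ?thesis by (intro graph_eqI) (auto simp: image_image i)
qed

lemma nbr_mapg: "is_graph G \<Longrightarrow> inj_on f (verts G) \<Longrightarrow> x \<in> verts G \<Longrightarrow>
   {y. (f x, y) \<in> edges (mapg f G)} = f ` {y. (x, y) \<in> edges G}"
  unfolding is_graph_def inj_on_def by auto

lemma induce_mapg: "is_graph G \<Longrightarrow> inj_on f (verts G) \<Longrightarrow> W \<subseteq> verts G \<Longrightarrow>
   induce (mapg f G) (f ` W) = mapg f (induce G W)"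
proof -
  assume g: "is_graph G" and i: "inj_on f (verts G)" and w: "W \<subseteq> verts G"
  have e: "edges G \<subseteq> verts G \<times> verts G" using g by (simp add: is_graph_def)
  have v: "f ` verts G \<inter> f ` W = f ` (verts G \<inter> W)" using w by auto
  have "map_prod f f ` edges G \<inter> (f ` W \<times> f ` W) = map_prod f f ` (edges G \<inter> (W \<times> W))"
  proof
    show "map_prod f f ` edges G \<inter> (f ` W \<times> f ` W) \<subseteq> map_prod f f ` (edges G \<inter> (W \<times> W))"
    proof
      fix p assume p: "p \<in> map_prod f f ` edges G \<inter> (f ` W \<times> f ` W)"
      then obtain a b where ab: "(a, b) \<in> edges G" "p = (f a, f b)" by auto
      from p ab obtain a' b' where "a' \<in> W" "b' \<in> W" "f a = f a'" "f b = f b'" by auto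
      moreover have "a \<in> verts G" "b \<in> verts G" using ab e by auto
      ultimately have "a \<in> W" "b \<in> W" using w i by (metis inj_onD subsetD)+
      then show "p \<in> map_prod f f ` (edges G \<inter> (W \<times> W))" using ab by auto
    qed
  qed auto
  moreover have w1: "verts G \<inter> W = W" using w by blast
  moreover have w2: "f ` verts G \<inter> f ` W = f ` W" using w by blast
  ultimately show ?thesis by (intro graph_eqI) (simp_all only: verts_induce edges_induce verts_mapg edges_mapg)
qed

lemma sphere_mapg: "is_graph G \<Longrightarrow> inj_on f (verts G) \<Longrightarrow> x \<in> verts G \<Longrightarrow>
   sphere (mapg f G) (f x) = mapg f (sphere G x)"
  unfolding sphere_def using nbr_mapg[of G f x] induce_mapg[of G f "{y. (x, y) \<in> edges G}"] unfolding is_graph_def by (auto simp del: edges_mapg)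

lemma induce_del_mapg: "is_graph G \<Longrightarrow> inj_on f (verts G) \<Longrightarrow> x \<in> verts G \<Longrightarrow>
   induce (mapg f G) (verts (mapg f G) - {f x}) = mapg f (induce G (verts G - {x}))"
proof -
  assume a: "is_graph G" "inj_on f (verts G)" "x \<in> verts G"
  have "verts (mapg f G) - {f x} = f ` (verts G - {x})" using a by (auto simp: inj_on_def)
  then show ?thesis using induce_mapg[OF a(1,2), of "verts G - {x}"] by simp
qed

lemma bdry_mapg: "is_graph G \<Longrightarrow> inj_on f (verts G) \<Longrightarrow>
   (\<And>x. x \<in> verts G \<Longrightarrow> B' (mapg f (sphere G x)) = B (sphere G x)) \<Longrightarrow>
   bdry B' (mapg f G) = mapg f (bdry B G)"
proof -
  assume a: "is_graph G" "inj_on f (verts G)" and h: "\<And>x. x \<in> verts G \<Longrightarrow> B' (mapg f (sphere G x)) = B (sphere G x)"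
  have "{y \<in> verts (mapg f G). B' (sphere (mapg f G) y)} = f ` {x \<in> verts G. B (sphere G x)}"
    using h sphere_mapg[OF a] by auto
  then show ?thesis unfolding bdry_def using induce_mapg[OF a, of "{x \<in> verts G. B (sphere G x)}"] by auto
qed

lemma card_mapg: "inj_on f (verts G) \<Longrightarrow> card (verts (mapg f G)) = card (verts G)"
  by (simp add: card_image)

lemma contractible_graph: "contractible G \<Longrightarrow> is_graph G"
  by (induction rule: contractible.induct) auto

lemma contractible_mapg1: "contractible G \<Longrightarrow> inj_on f (verts G) \<Longrightarrow> contractible (mapg f G)"
proof (induction arbitrary: f rule: contractible.induct)
  case (K1 G)
  then show ?case by (intro contractible.K1) (auto simp: is_graph_mapg card_image)
next
  case (step G x)
  have i1: "inj_on f (verts (sphere G x))" using step.prems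
    by (rule inj_on_subset) (simp add: sphere_def)
  have i2: "inj_on f (verts (induce G (verts G - {x})))" using step.prems
    by (rule inj_on_subset) simp
  show ?case
  proof (rule contractible.step[of _ "f x"])
    show "is_graph (mapg f G)" using step is_graph_mapg by blast
    show "f x \<in> verts (mapg f G)" using step by simp
    show "contractible (sphere (mapg f G) (f x))"
      using step.IH(1)[OF i1] sphere_mapg[OF step.hyps(1) step.prems step.hyps(2)] by simp
    show "contractible (induce (mapg f G) (verts (mapg f G) - {f x}))"
      using step.IH(2)[OF i2] induce_del_mapg[OF step.hyps(1) step.prems step.hyps(2)] by simp
  qed
qed

lemma contractible_mapg:
  assumes g: "is_graph G" and i: "inj_on f (verts G)"
  shows "contractible (mapg f G) = contractible G"
proof
  assume c: "contractible (mapg f G)"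
  have "contractible (mapg (inv_into (verts G) f) (mapg f G))"
    by (rule contractible_mapg1[OF c]) (simp add: inj_on_inv_into)
  then show "contractible G" using mapg_inv[OF g i] by simp
next
  assume "contractible G" then show "contractible (mapg f G)" using i by (rule contractible_mapg1)
qed

lemma inj_sub_sphere: "inj_on f (verts G) \<Longrightarrow> inj_on f (verts (sphere G x))"
  by (rule inj_on_subset) (auto simp: sphere_def)
lemma inj_sub_induce: "inj_on f (verts G) \<Longrightarrow> inj_on f (verts (induce G W))"
  by (rule inj_on_subset) auto
lemma inj_sub_bdry: "inj_on f (verts G) \<Longrightarrow> inj_on f (verts (bdry B G))"
  by (rule inj_on_subset) (auto simp: bdry_def)

locale trans_pred =
  fixes Sa Ba :: "'a graph \<Rightarrow> bool" and Sb Bb :: "'b graph \<Rightarrow> bool" and f :: "'a \<Rightarrow> 'b"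
  assumes H: "\<And>G. is_graph G \<Longrightarrow> inj_on f (verts G) \<Longrightarrow> Sb (mapg f G) = Sa G \<and> Bb (mapg f G) = Ba G"
begin

lemma Gstep_mapg: assumes g: "is_graph G" and i: "inj_on f (verts G)"
  shows "Gstep Sb Bb (mapg f G) = Gstep Sa Ba G"
proof -
  have h: "\<And>x. x \<in> verts G \<Longrightarrow> Sb (sphere (mapg f G) (f x)) = Sa (sphere G x) \<and> Bb (sphere (mapg f G) (f x)) = Ba (sphere G x)"
    using H[OF is_graph_sphere[OF g] inj_sub_sphere[OF i]] sphere_mapg[OF g i] by simp
  show ?thesis unfolding Gstep_def using h is_graph_mapg[OF g i] g by auto
qed

lemma bdry_eq: assumes g: "is_graph G" and i: "inj_on f (verts G)"
  shows "bdry Bb (mapg f G) = mapg f (bdry Ba G)"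
  using H[OF is_graph_sphere[OF g] inj_sub_sphere[OF i]] by (intro bdry_mapg[OF g i]) simp

lemma Bstep_mapg: assumes g: "is_graph G" and i: "inj_on f (verts G)"
  shows "Bstep Sb Bb (mapg f G) = Bstep Sa Ba G"
  unfolding Bstep_def using Gstep_mapg[OF g i] contractible_mapg[OF g i] bdry_eq[OF g i]
    H[OF is_graph_bdry[OF g] inj_sub_bdry[OF i]] by simp

lemma Sstep_mapg: assumes g: "is_graph G" and i: "inj_on f (verts G)"
  shows "Sstep Sb Bb (mapg f G) = Sstep Sa Ba G"
proof -
  have h: "\<And>x. x \<in> verts G \<Longrightarrow> Bstep Sb Bb (induce (mapg f G) (verts (mapg f G) - {f x})) = Bstep Sa Ba (induce G (verts G - {x}))"
    using induce_del_mapg[OF g i] Bstep_mapg[OF is_graph_induce[OF g] inj_sub_induce[OF i]] by simp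
  show ?thesis unfolding Sstep_def using Gstep_mapg[OF g i] contractible_mapg[OF g i] h by auto
qed
end

lemma Sd_Suc: "Sd (Suc d) = Sstep (Sd d) (Bd d)" by (simp add: Sd_def Bd_def)
lemma Bd_Suc: "Bd (Suc d) = Bstep (Sd d) (Bd d)" by (simp add: Sd_def Bd_def)
lemma Sd_0: "Sd 0 G = (is_graph G \<and> edges G = {} \<and> card (verts G) = 2)" by (simp add: Sd_def)
lemma Bd_0: "Bd 0 G = (is_graph G \<and> edges G = {} \<and> card (verts G) = 1)" by (simp add: Bd_def)

lemma Sd1: "Sd 1 = Sstep (Sd 0) (Bd 0)" by (simp only: One_nat_def Sd_Suc)
lemma Bd1: "Bd 1 = Bstep (Sd 0) (Bd 0)" by (simp only: One_nat_def Bd_Suc)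
lemma Sd2: "Sd 2 = Sstep (Sd 1) (Bd 1)" by (simp only: numeral_2_eq_2 One_nat_def Sd_Suc)
lemma Bd2: "Bd 2 = Bstep (Sd 1) (Bd 1)" by (simp only: numeral_2_eq_2 One_nat_def Bd_Suc)
lemma Gd3: "Gd 3 = Gstep (Sd 2) (Bd 2)" by (rule ext) (simp add: Gd_def)
lemma delta3: "delta 3 H = bdry (Bd 2) H" by (simp add: delta_def)

lemma SB_mapg: "is_graph G \<Longrightarrow> inj_on f (verts G) \<Longrightarrow> Sd d (mapg f G) = Sd d G \<and> Bd d (mapg f G) = Bd d G"
proof (induction d arbitrary: G)
  case 0
  then show ?case by (auto simp: Sd_0 Bd_0 card_image is_graph_mapg)
next
  case (Suc d)
  interpret trans_pred "Sd d" "Bd d" "Sd d" "Bd d" f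
    by unfold_locales (rule Suc.IH)
  show ?case unfolding Sd_Suc Bd_Suc using Sstep_mapg[OF Suc.prems] Bstep_mapg[OF Suc.prems] by simp
qed

definition cone :: "'a graph \<Rightarrow> 'a option graph" where
  "cone G = (insert None (Some ` verts G), map_prod Some Some ` edges G \<union> (\<lambda>v. (None, Some v)) ` verts G
      \<union> (\<lambda>v. (Some v, None)) ` verts G)"

lemma verts_cone[simp]: "verts (cone G) = insert None (Some ` verts G)" by (simp add: cone_def verts_def)
lemma edges_cone[simp]: "edges (cone G) = map_prod Some Some ` edges G \<union> (\<lambda>v. (None, Some v)) ` verts G
      \<union> (\<lambda>v. (Some v, None)) ` verts G" by (simp add: cone_def edges_def)

lemma is_graph_cone: "is_graph G \<Longrightarrow> is_graph (cone G)"
  unfolding is_graph_def by auto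

lemma sphere_cone_None: "is_graph G \<Longrightarrow> sphere (cone G) None = mapg Some G"
  unfolding sphere_def is_graph_def by (intro graph_eqI) auto

lemma sphere_cone_Some: "is_graph G \<Longrightarrow> v \<in> verts G \<Longrightarrow> sphere (cone G) (Some v) = cone (sphere G v)"
  unfolding sphere_def is_graph_def by (intro graph_eqI) auto

lemma induce_cone_del: "is_graph G \<Longrightarrow> v \<in> verts G \<Longrightarrow>
   induce (cone G) (verts (cone G) - {Some v}) = cone (induce G (verts G - {v}))"
  unfolding is_graph_def by (intro graph_eqI) auto

lemma contractible_cone: "is_graph G \<Longrightarrow> contractible (cone G)"
proof (induction "card (verts G)" arbitrary: G rule: less_induct)
  case less
  show ?case
  proof (cases "verts G = {}")
    case True
    then show ?thesis using less.prems by (intro contractible.K1) (auto simp: is_graph_cone)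
  next
    case False
    then obtain v where v: "v \<in> verts G" by auto
    have fin: "finite (verts G)" using less.prems by (simp add: is_graph_def)
    have c1: "card (verts (sphere G v)) < card (verts G)"
      using less.prems v fin unfolding sphere_def is_graph_def
      by (intro psubset_card_mono) auto
    have c2: "card (verts (induce G (verts G - {v}))) < card (verts G)"
      using v fin by (intro psubset_card_mono) auto
    show ?thesis
    proof (rule contractible.step[of _ "Some v"])
      show "is_graph (cone G)" using less.prems by (rule is_graph_cone)
      show "Some v \<in> verts (cone G)" using v by simp
      show "contractible (sphere (cone G) (Some v))"
        using less.hyps[OF c1 is_graph_sphere[OF less.prems]] sphere_cone_Some[OF less.prems v] by simp
      show "contractible (induce (cone G) (verts (cone G) - {Some v}))"
        using less.hyps[OF c2 is_graph_induce[OF less.prems]] induce_cone_del[OF less.prems v] by simp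
    qed
  qed
qed

lemma SB_disj: "Sd d G \<Longrightarrow> \<not> Bd d G"
  by (cases d) (auto simp: Sd_0 Bd_0 Sd_Suc Bd_Suc Sstep_def Bstep_def)

lemma Gstep_sph: "Gstep S B G \<Longrightarrow> x \<in> verts G \<Longrightarrow> S (sphere G x) \<or> B (sphere G x)"
  by (simp add: Gstep_def)

lemma SB0_ne: "Sd 0 G \<or> Bd 0 G \<Longrightarrow> verts G \<noteq> {}"
  by (auto simp: Sd_0 Bd_0)

lemma verts_sphere: "verts (sphere G x) = verts G \<inter> {y. (x, y) \<in> edges G}"
  by (simp add: sphere_def)

lemma La: assumes K: "Sd 1 K" and v: "v \<in> verts K" shows "Sd 0 (sphere K v)"
proof (rule ccontr)
  assume n: "\<not> Sd 0 (sphere K v)"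
  have KS: "Sstep (Sd 0) (Bd 0) K" using K unfolding Sd1 .
  then have g: "is_graph K" by (simp add: Sstep_def Gstep_def)
  have "Bd 0 (sphere K v)" using n Gstep_sph[OF _ v] KS by (auto simp: Sstep_def)
  then obtain a where a: "verts (sphere K v) = {a}" by (auto simp: Bd_0 card_1_singleton_iff)
  then have av: "(v, a) \<in> edges K" "a \<in> verts K" by (auto simp: verts_sphere)
  have "a \<noteq> v" using av g by (auto simp: is_graph_def)
  have B: "Bd 1 (induce K (verts K - {a}))" using KS av(2) unfolding Sstep_def Bd1 by blast
  then have "Gstep (Sd 0) (Bd 0) (induce K (verts K - {a}))" unfolding Bd1 Bstep_def by blast
  moreover have "v \<in> verts (induce K (verts K - {a}))" using v \<open>a \<noteq> v\<close> by simp
  ultimately have "Sd 0 (sphere (induce K (verts K - {a})) v) \<or> Bd 0 (sphere (induce K (verts K - {a})) v)" by (rule Gstep_sph)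
  then have "verts (sphere (induce K (verts K - {a})) v) \<noteq> {}" by (rule SB0_ne)
  moreover have "verts (sphere (induce K (verts K - {a})) v) = {}"
    using a by (auto simp: verts_sphere)
  ultimately show False by simp
qed

lemma Lb: assumes K: "Sd 2 K" and v: "v \<in> verts K" shows "Sd 1 (sphere K v)"
proof (rule ccontr)
  assume n: "\<not> Sd 1 (sphere K v)"
  have KS: "Sstep (Sd 1) (Bd 1) K" using K unfolding Sd2 .
  then have g: "is_graph K" by (simp add: Sstep_def Gstep_def)
  define P where "P = sphere K v"
  have "Bd 1 P" using n Gstep_sph[OF _ v] KS by (auto simp: Sstep_def P_def)
  then have "Sd 0 (bdry (Bd 0) P)" unfolding Bd1 Bstep_def by blast
  then obtain a where a: "a \<in> verts P" "Bd 0 (sphere P a)" using SB0_ne[of "bdry (Bd 0) P"]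
    by (auto simp: bdry_def)
  then obtain w where w: "verts (sphere P a) = {w}" by (auto simp: Bd_0 card_1_singleton_iff)
  have facts: "(v, a) \<in> edges K" "a \<in> verts K" "(a, w) \<in> edges K" "(v, w) \<in> edges K" "w \<in> verts K"
    using a(1) w by (auto simp: verts_sphere P_def sphere_def)
  have ne: "a \<noteq> v" "w \<noteq> v" "a \<noteq> w" using facts g by (auto simp: is_graph_def)
  define K' where "K' = induce K (verts K - {w})"
  have "Bd 2 K'" using KS facts(5) unfolding Sstep_def Bd2 K'_def by blast
  then have "Gstep (Sd 1) (Bd 1) K'" unfolding Bd2 Bstep_def by blast
  moreover have "v \<in> verts K'" using v ne by (simp add: K'_def)
  ultimately have "Sd 1 (sphere K' v) \<or> Bd 1 (sphere K' v)" by (rule Gstep_sph)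
  then have Q: "Gstep (Sd 0) (Bd 0) (sphere K' v)"
    unfolding Sd1 Bd1 Sstep_def Bstep_def by blast
  have "a \<in> verts (sphere K' v)" using facts ne v by (auto simp: K'_def sphere_def)
  then have "Sd 0 (sphere (sphere K' v) a) \<or> Bd 0 (sphere (sphere K' v) a)" by (rule Gstep_sph[OF Q])
  then have "verts (sphere (sphere K' v) a) \<noteq> {}" by (rule SB0_ne)
  moreover have "verts (sphere (sphere K' v) a) = {}"
    using w by (auto simp: K'_def P_def sphere_def)
  ultimately show False by simp
qed

lemma cone_main:
  assumes g: "is_graph K" and S: "Sd d K" and sp: "\<And>v. v \<in> verts K \<Longrightarrow> Bd d (cone (sphere K v))"
  shows "Gstep (Sd d) (Bd d) (cone K) \<and> bdry (Bd d) (cone K) = mapg Some K"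
proof -
  have i: "inj_on Some (verts K)" by simp
  have s0: "Sd d (sphere (cone K) None)" using S SB_mapg[OF g i] sphere_cone_None[OF g] by simp
  have s1: "\<And>v. v \<in> verts K \<Longrightarrow> Bd d (sphere (cone K) (Some v))" using sp sphere_cone_Some[OF g] by simp
  have G: "Gstep (Sd d) (Bd d) (cone K)" unfolding Gstep_def
    using is_graph_cone[OF g] s0 s1 SB_disj[OF s0] by auto
  have "{x \<in> verts (cone K). Bd d (sphere (cone K) x)} = Some ` verts K"
    using s1 SB_disj[OF s0] by auto
  then have "bdry (Bd d) (cone K) = induce (cone K) (Some ` verts K)" by (simp add: bdry_def)
  also have "\<dots> = mapg Some K" using g unfolding is_graph_def by (intro graph_eqI) auto
  finally show ?thesis using G by simp
qed

lemma cone_B: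
  assumes g: "is_graph K" and S: "Sd d K" and sp: "\<And>v. v \<in> verts K \<Longrightarrow> Bd d (cone (sphere K v))"
  shows "Bd (Suc d) (cone K)"
  using cone_main[OF assms] contractible_cone[OF g] S SB_mapg[OF g, of Some]
  by (simp add: Bd_Suc Bstep_def)

lemma Sd_graph: "Sd d G \<Longrightarrow> is_graph G"
  by (cases d) (auto simp: Sd_0 Sd_Suc Sstep_def Gstep_def)

lemma cone1: "Sd 0 J \<Longrightarrow> Bd 1 (cone J)"
proof -
  assume J: "Sd 0 J"
  have g: "is_graph J" using J by (simp add: Sd_0)
  have e: "edges J = {}" using J by (simp add: Sd_0)
  have "\<And>v. v \<in> verts J \<Longrightarrow> Bd 0 (cone (sphere J v))"
  proof -
    fix v assume "v \<in> verts J"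
    have "verts (sphere J v) = {}" "edges (sphere J v) = {}" using e by (auto simp: sphere_def)
    then show "Bd 0 (cone (sphere J v))" by (simp add: Bd_0 is_graph_def)
  qed
  then have "Bd (Suc 0) (cone J)" by (rule cone_B[OF g J])
  then show ?thesis by simp
qed

lemma cone2: assumes K: "Sd 1 K" shows "Bd 2 (cone K)"
proof -
  have "Bd (Suc 1) (cone K)"
    by (rule cone_B[OF Sd_graph[OF K] K]) (rule cone1, rule La[OF K])
  then show ?thesis by (simp only: Suc_1)
qed

lemma cone3: assumes K: "Sd 2 K" shows "Gd 3 (cone K) \<and> delta 3 (cone K) = mapg Some K"
proof -
  have "Gstep (Sd 2) (Bd 2) (cone K) \<and> bdry (Bd 2) (cone K) = mapg Some K"
    by (rule cone_main[OF Sd_graph[OF K] K]) (rule cone2, rule Lb[OF K])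
  then show ?thesis by (simp add: Gd3 delta3)
qed

lemma verts_du[simp]: "verts (disj_union A B) = Inl ` verts A \<union> Inr ` verts B"
  by (auto simp: disj_union_def verts_def)
lemma edges_du[simp]: "edges (disj_union A B) = map_prod Inl Inl ` edges A \<union> map_prod Inr Inr ` edges B"
  by (auto simp: disj_union_def edges_def)

lemma is_graph_du: "is_graph A \<Longrightarrow> is_graph B \<Longrightarrow> is_graph (disj_union A B)"
  unfolding is_graph_def by auto

lemma sphere_du_l: "is_graph A \<Longrightarrow> is_graph B \<Longrightarrow> x \<in> verts A \<Longrightarrow> sphere (disj_union A B) (Inl x) = mapg Inl (sphere A x)"
  unfolding sphere_def is_graph_def by (intro graph_eqI) auto
lemma sphere_du_r: "is_graph A \<Longrightarrow> is_graph B \<Longrightarrow> x \<in> verts B \<Longrightarrow> sphere (disj_union A B) (Inr x) = mapg Inr (sphere B x)"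
  unfolding sphere_def is_graph_def by (intro graph_eqI) auto

lemma mapg_du: "disj_union (mapg f A) (mapg g B) = mapg (map_sum f g) (disj_union A B)"
proof -
  have c1: "map_prod (map_sum f g) (map_sum f g) \<circ> map_prod Inl Inl = map_prod Inl Inl \<circ> map_prod f f" by (rule ext) auto
  have c2: "map_prod (map_sum f g) (map_sum f g) \<circ> map_prod Inr Inr = map_prod Inr Inr \<circ> map_prod g g" by (rule ext) auto
  have c3: "map_sum f g \<circ> Inl = Inl \<circ> f" "map_sum f g \<circ> Inr = Inr \<circ> g" by (rule ext, simp)+
  show ?thesis by (intro graph_eqI) (simp_all only: verts_du edges_du verts_mapg edges_mapg image_Un image_comp c1 c2 c3)
qed

lemma mapg_mapg: "mapg f (mapg h X) = mapg (f \<circ> h) X"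
  by (intro graph_eqI) (simp_all add: image_comp prod.map_comp)

lemma du_main:
  assumes a: "is_graph A" and b: "is_graph B" and GA: "Gstep (Sd d) (Bd d) A" and GB: "Gstep (Sd d) (Bd d) B"
  shows "Gstep (Sd d) (Bd d) (disj_union A B) \<and> bdry (Bd d) (disj_union A B) = disj_union (bdry (Bd d) A) (bdry (Bd d) B)"
proof -
  have l: "\<And>x. x \<in> verts A \<Longrightarrow> Sd d (sphere (disj_union A B) (Inl x)) = Sd d (sphere A x) \<and> Bd d (sphere (disj_union A B) (Inl x)) = Bd d (sphere A x)"
    using sphere_du_l[OF a b] SB_mapg[OF is_graph_sphere[OF a], of Inl] by simp
  have r: "\<And>x. x \<in> verts B \<Longrightarrow> Sd d (sphere (disj_union A B) (Inr x)) = Sd d (sphere B x) \<and> Bd d (sphere (disj_union A B) (Inr x)) = Bd d (sphere B x)"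
    using sphere_du_r[OF a b] SB_mapg[OF is_graph_sphere[OF b], of Inr] by simp
  have G: "Gstep (Sd d) (Bd d) (disj_union A B)"
    using GA GB l r is_graph_du[OF a b] unfolding Gstep_def by auto
  have "{x \<in> verts (disj_union A B). Bd d (sphere (disj_union A B) x)}
     = Inl ` {x \<in> verts A. Bd d (sphere A x)} \<union> Inr ` {x \<in> verts B. Bd d (sphere B x)}"
    using l r by auto
  then have "bdry (Bd d) (disj_union A B) = induce (disj_union A B) (Inl ` {x \<in> verts A. Bd d (sphere A x)} \<union> Inr ` {x \<in> verts B. Bd d (sphere B x)})"
    by (simp add: bdry_def)
  also have "\<dots> = disj_union (bdry (Bd d) A) (bdry (Bd d) B)"
    by (intro graph_eqI) (auto simp: bdry_def)
  finally show ?thesis using G by simp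
qed

lemma graph_iso_mapg: assumes g: "is_graph X" and i: "inj_on h (verts X)" shows "graph_iso (mapg h X) X"
  unfolding graph_iso_def
proof (intro exI conjI ballI)
  show "bij_betw (inv_into (verts X) h) (verts (mapg h X)) (verts X)"
    using i by (simp add: bij_betw_inv_into inj_on_imp_bij_betw)
  fix u v assume u: "u \<in> verts (mapg h X)" and v: "v \<in> verts (mapg h X)"
  then obtain x y where xy: "x \<in> verts X" "y \<in> verts X" "u = h x" "v = h y" by auto
  have e: "edges X \<subseteq> verts X \<times> verts X" using g by (simp add: is_graph_def)
  show "((u, v) \<in> edges (mapg h X)) = ((inv_into (verts X) h u, inv_into (verts X) h v) \<in> edges X)"
  proof -
    have inv: "inv_into (verts X) h u = x" "inv_into (verts X) h v = y" using xy i by (simp_all add: inv_into_f_f)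
    have "(h x, h y) \<in> map_prod h h ` edges X \<longleftrightarrow> (x, y) \<in> edges X"
    proof
      assume "(h x, h y) \<in> map_prod h h ` edges X"
      then obtain a b where ab: "(a, b) \<in> edges X" "h a = h x" "h b = h y" by auto
      then have "a \<in> verts X" "b \<in> verts X" using e by auto
      then have "a = x" "b = y" using ab xy i by (auto dest: inj_onD)
      then show "(x, y) \<in> edges X" using ab by simp
    qed auto
    then show ?thesis using inv xy by simp
  qed
qed

lemma all_cob: assumes S1: "Sd 2 G1" and S2: "Sd 2 G2" shows "cobordant G1 G2"
proof -
  have g1: "is_graph G1" and g2: "is_graph G2" using S1 S2 by (auto intro: Sd_graph)
  define H0 where "H0 = disj_union (cone G1) (cone G2)"
  have c1: "Gstep (Sd 2) (Bd 2) (cone G1)" "bdry (Bd 2) (cone G1) = mapg Some G1"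
    using cone3[OF S1] by (simp_all add: Gd3 delta3)
  have c2: "Gstep (Sd 2) (Bd 2) (cone G2)" "bdry (Bd 2) (cone G2) = mapg Some G2"
    using cone3[OF S2] by (simp_all add: Gd3 delta3)
  have d: "Gstep (Sd 2) (Bd 2) H0" "bdry (Bd 2) H0 = mapg (map_sum Some Some) (disj_union G1 G2)"
    using du_main[OF is_graph_cone[OF g1] is_graph_cone[OF g2] c1(1) c2(1)] c1(2) c2(2)
    by (simp_all add: H0_def mapg_du)
  have gH0: "is_graph H0" using is_graph_du[OF is_graph_cone[OF g1] is_graph_cone[OF g2]] by (simp add: H0_def)
  then have "finite (verts H0)" by (simp add: is_graph_def)
  then obtain f :: "_ \<Rightarrow> nat" where f: "inj_on f (verts H0)" using finite_imp_inj_to_nat_seg by blast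
  interpret trans_pred "Sd 2" "Bd 2" "Sd 2" "Bd 2" f
    by unfold_locales (rule SB_mapg)
  have "Gd 3 (mapg f H0)" using Gstep_mapg[OF gH0 f] d(1) by (simp add: Gd3)
  moreover have "delta 3 (mapg f H0) = mapg f (mapg (map_sum Some Some) (disj_union G1 G2))"
    using bdry_eq[OF gH0 f] d(2) by (simp add: delta3)
  moreover have "mapg f (mapg (map_sum Some Some) (disj_union G1 G2)) = mapg (f \<circ> map_sum Some Some) (disj_union G1 G2)"
    by (rule mapg_mapg)
  moreover have "inj_on (f \<circ> map_sum Some Some) (verts (disj_union G1 G2))"
  proof (rule comp_inj_on)
    show "inj_on (map_sum Some Some) (verts (disj_union G1 G2))" by (auto simp: inj_on_def)
    have "map_sum Some Some ` verts (disj_union G1 G2) = verts (bdry (Bd 2) H0)" using d(2) by simp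
    also have "\<dots> \<subseteq> verts H0" by (simp add: bdry_def)
    finally show "inj_on f (map_sum Some Some ` verts (disj_union G1 G2))" using f by (rule inj_on_subset[rotated])
  qed
  ultimately have "Gd 3 (mapg f H0) \<and> graph_iso (delta 3 (mapg f H0)) (disj_union G1 G2)"
    using graph_iso_mapg[OF is_graph_du[OF g1 g2]] by simp
  then show ?thesis unfolding cobordant_def by blast
qed

theorem mainTheorem6:
  shows "equiv {G :: 'a graph. Sd 2 G} {(G1, G2). Sd 2 G1 \<and> Sd 2 G2 \<and> cobordant G1 G2}"
proof -
  have "{(G1, G2). Sd 2 G1 \<and> Sd 2 G2 \<and> cobordant G1 G2} = {G :: 'a graph. Sd 2 G} \<times> {G. Sd 2 G}"
    using all_cob by auto
  then show ?thesis by (simp add: equiv_def refl_on_def sym_def trans_def)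
qed

end
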